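(* For every finite $\sigma$-structure $\mathscr{A}$, $\mathsf{tw}(\mathscr{A})=\kappa^{\mathbb{P}}(\mathscr{A})-1$.
   Context: Let $\mathbf{k}=\{1,\dots,k\}$, $k\ge1$. $\mathbb{P}_k\mathscr{A}$ has universe $(\mathbf{k}\times A)^+$ (non-empty finite sequences $[(p_1,a_1),\dots,(p_n,a_n)]$); $\varepsilon$ gives the $A$-component of the last move; for $n$-ary $R$, $R^{\mathbb{P}_k\mathscr{A}}(s_1,\dots,s_n)$ iff the $s_i$ are pairwise prefix-comparable, for each $i$ the pebble index of the last move of $s_i$ does not occur in the suffix of $s_i$ in any $s_j\sqsupseteq s_i$, and $R^{\mathscr{A}}(\varepsilon s_1,\dots,\varepsilon s_n)$. Comultiplication: $\delta[(p_1,a_1),\dots,(p_j,a_j)]=[(p_1,s_1),\dots,(p_j,s_j)]$ where $s_i=[(p_1,a_1),\dots,(p_i,a_i)]$; functor action: $\mathbb{P}_k h[(p_1,a_1),\dots,(p_j,a_j)]=[(p_1,h(a_1)),\dots,(p_j,h(a_j))]$. A $\mathbb{P}_k$-coalgebra on $\mathscr{A}$ is a homomorphism $\alpha:\mathscr{A}\to\mathbb{P}_k\mathscr{A}$ with $\delta\circ\alpha=\mathbb{P}_k\alpha\circ\alpha$ and $\varepsilon\circ\alpha=\mathrm{id}$; $\kappa^{\mathbb{P}}(\mathscr{A})$ is the least $k$ for which one exists. $\mathsf{tw}(\mathscr{A})$ is the tree-width of the Gaifman graph $\mathcal{G}(\mathscr{A})=(A,\frown)$ ($a\frown a'$ iff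 $a\ne a'$ occur in a common tuple of some relation), i.e. the minimum over tree decompositions $(T,\le,\lambda)$ of $\max_x|\lambda(x)|-1$, where a tree decomposition is a rooted tree $T$ with $\lambda:T\to\mathscr{P}(A)$ such that every vertex is in some bag, adjacent vertices share a bag, and the bags containing any given vertex form a connected set (contain every node on the tree path between two of them). *)

theory Defs
  imports Main "HOL-Library.Sublist"
begin

type_synonym ('a, 'r) struct = "'a set \<times> ('r \<Rightarrow> 'a list set)"

definition is_struct :: "('r \<Rightarrow> nat) \<Rightarrow> ('a, 'r) struct \<Rightarrow> bool" where
  "is_struct ar S \<longleftrightarrow> (\<forall>r. \<forall>t\<in>snd S r. length t = ar r \<and> set t \<subseteq> fst S)"

definition is_hom :: "('a, 'r) struct \<Rightarrow> ('b, 'r) struct \<Rightarrow> ('a \<Rightarrow> 'b) \<Rightarrow> bool" where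
  "is_hom S S' h \<longleftrightarrow> (\<forall>a\<in>fst S. h a \<in> fst S') \<and> (\<forall>r. \<forall>t\<in>snd S r. map h t \<in> snd S' r)"

definition Pk_univ :: "nat \<Rightarrow> 'a set \<Rightarrow> (nat \<times> 'a) list set" where
  "Pk_univ k A = {s. s \<noteq> [] \<and> set s \<subseteq> {1..k} \<times> A}"

definition eps :: "(nat \<times> 'a) list \<Rightarrow> 'a" where
  "eps s = snd (last s)"

definition Pk_rel :: "nat \<Rightarrow> ('a, 'r) struct \<Rightarrow> 'r \<Rightarrow> (nat \<times> 'a) list list set" where
  "Pk_rel k S r = {ss. set ss \<subseteq> Pk_univ k (fst S)
     \<and> (\<forall>i<length ss. \<forall>j<length ss. prefix (ss!i) (ss!j) \<or> prefix (ss!j) (ss!i))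
     \<and> (\<forall>i<length ss. \<forall>j<length ss. prefix (ss!i) (ss!j) \<longrightarrow>
           fst (last (ss!i)) \<notin> fst ` set (drop (length (ss!i)) (ss!j)))
     \<and> map eps ss \<in> snd S r}"

definition Pk :: "nat \<Rightarrow> ('a, 'r) struct \<Rightarrow> ((nat \<times> 'a) list, 'r) struct" where
  "Pk k S = (Pk_univ k (fst S), Pk_rel k S)"

definition Pk_map :: "('a \<Rightarrow> 'b) \<Rightarrow> (nat \<times> 'a) list \<Rightarrow> (nat \<times> 'b) list" where
  "Pk_map h s = map (\<lambda>(p, a). (p, h a)) s"

definition delta :: "(nat \<times> 'a) list \<Rightarrow> (nat \<times> (nat \<times> 'a) list) list" where
  "delta s = map (\<lambda>i. (fst (s!i), take (Suc i) s)) [0..<length s]"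

definition Pk_coalgebra :: "nat \<Rightarrow> ('a, 'r) struct \<Rightarrow> ('a \<Rightarrow> (nat \<times> 'a) list) \<Rightarrow> bool" where
  "Pk_coalgebra k S \<alpha> \<longleftrightarrow> is_hom S (Pk k S) \<alpha>
     \<and> (\<forall>a\<in>fst S. delta (\<alpha> a) = Pk_map \<alpha> (\<alpha> a))
     \<and> (\<forall>a\<in>fst S. eps (\<alpha> a) = a)"

definition kappaP :: "('a, 'r) struct \<Rightarrow> nat" where
  "kappaP S = (LEAST k. k \<ge> 1 \<and> (\<exists>\<alpha>. Pk_coalgebra k S \<alpha>))"

definition gaifman_adj :: "('a, 'r) struct \<Rightarrow> 'a \<Rightarrow> 'a \<Rightarrow> bool" where
  "gaifman_adj S a b \<longleftrightarrow> a \<noteq> b \<and> (\<exists>r. \<exists>t\<in>snd S r. a \<in> set t \<and> b \<in> set t)"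

definition rooted_tree :: "nat set \<Rightarrow> (nat \<Rightarrow> nat \<Rightarrow> bool) \<Rightarrow> bool" where
  "rooted_tree T le \<longleftrightarrow> finite T
     \<and> (\<forall>x\<in>T. le x x)
     \<and> (\<forall>x\<in>T. \<forall>y\<in>T. le x y \<and> le y x \<longrightarrow> x = y)
     \<and> (\<forall>x\<in>T. \<forall>y\<in>T. \<forall>z\<in>T. le x y \<and> le y z \<longrightarrow> le x z)
     \<and> (\<exists>r\<in>T. \<forall>x\<in>T. le r x)
     \<and> (\<forall>x\<in>T. \<forall>y\<in>T. \<forall>z\<in>T. le y x \<and> le z x \<longrightarrow> le y z \<or> le z y)"

definition on_tree_path :: "nat set \<Rightarrow> (nat \<Rightarrow> nat \<Rightarrow> bool) \<Rightarrow> nat \<Rightarrow> nat \<Rightarrow> nat \<Rightarrow> bool" where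
  "on_tree_path T le x y z \<longleftrightarrow> z \<in> T \<and> (le z x \<or> le z y)
     \<and> (\<forall>w\<in>T. le w x \<and> le w y \<longrightarrow> le w z)"

definition tree_decomposition ::
  "'a set \<Rightarrow> ('a \<Rightarrow> 'a \<Rightarrow> bool) \<Rightarrow> nat set \<Rightarrow> (nat \<Rightarrow> nat \<Rightarrow> bool) \<Rightarrow> (nat \<Rightarrow> 'a set) \<Rightarrow> bool" where
  "tree_decomposition V E T le bag \<longleftrightarrow> rooted_tree T le
     \<and> (\<forall>x\<in>T. bag x \<subseteq> V)
     \<and> (\<forall>v\<in>V. \<exists>x\<in>T. v \<in> bag x)
     \<and> (\<forall>v\<in>V. \<forall>w\<in>V. E v w \<longrightarrow> (\<exists>x\<in>T. v \<in> bag x \<and> w \<in> bag x))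
     \<and> (\<forall>v x y z. x \<in> T \<and> y \<in> T \<and> v \<in> bag x \<and> v \<in> bag y \<and> on_tree_path T le x y z
           \<longrightarrow> v \<in> bag z)"

definition decomp_width :: "nat set \<Rightarrow> (nat \<Rightarrow> 'a set) \<Rightarrow> int" where
  "decomp_width T bag = int (Max ((\<lambda>x. card (bag x)) ` T)) - 1"

definition treewidth :: "'a set \<Rightarrow> ('a \<Rightarrow> 'a \<Rightarrow> bool) \<Rightarrow> int" where
  "treewidth V E = (LEAST w. \<exists>T le bag. tree_decomposition V E T le bag \<and> w = decomp_width T bag)"

definition tw :: "('a, 'r) struct \<Rightarrow> int" where
  "tw S = treewidth (fst S) (gaifman_adj S)"

end

theory Submission
  imports Defs
begin

lemma greedy_color:
  fixes key :: "'a \<Rightarrow> nat"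
  assumes "finite V"
    and "\<And>u w. u \<in> V \<Longrightarrow> w \<in> V \<Longrightarrow> N u w \<Longrightarrow> key u < key w"
    and "\<And>w. w \<in> V \<Longrightarrow> card {u\<in>V. N u w} < k"
  shows "\<exists>c. (\<forall>v\<in>V. c v \<in> {1..k}) \<and> (\<forall>u\<in>V. \<forall>w\<in>V. N u w \<longrightarrow> c u \<noteq> c w)"
  using assms
proof (induction "card V" arbitrary: V rule: less_induct)
  case less
  show ?case
  proof (cases "V = {}")
    case True
    then show ?thesis by auto
  next
    case False
    obtain w where w: "w \<in> V" "key w = Max (key ` V)"
      using False less.prems(1) by (metis (mono_tags, lifting) Max_in finite_imageI image_iff image_is_empty)
    have wmax: "\<And>u. u \<in> V \<Longrightarrow> key u \<le> key w" using w less.prems(1) by simp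
    define V' where "V' = V - {w}"
    have cV': "card V' < card V" unfolding V'_def using w less.prems(1)
      by (meson card_Diff1_less)
    have "\<exists>c. (\<forall>v\<in>V'. c v \<in> {1..k}) \<and> (\<forall>u\<in>V'. \<forall>w\<in>V'. N u w \<longrightarrow> c u \<noteq> c w)"
    proof (rule less.hyps[OF cV'])
      show "finite V'" using less.prems(1) V'_def by simp
      show "\<And>u w. u \<in> V' \<Longrightarrow> w \<in> V' \<Longrightarrow> N u w \<Longrightarrow> key u < key w"
        using less.prems(2) V'_def by blast
      fix w' assume "w' \<in> V'"
      have "card {u\<in>V'. N u w'} \<le> card {u\<in>V. N u w'}"
        by (rule card_mono) (use less.prems(1) V'_def in auto)
      also have "\<dots> < k" using less.prems(3) \<open>w' \<in> V'\<close> V'_def by blast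
      finally show "card {u\<in>V'. N u w'} < k" .
    qed
    then obtain c' where c': "\<forall>v\<in>V'. c' v \<in> {1..k}" "\<forall>u\<in>V'. \<forall>w\<in>V'. N u w \<longrightarrow> c' u \<noteq> c' w"
      by blast
    define used where "used = c' ` {u\<in>V. N u w}"
    have "card used \<le> card {u\<in>V. N u w}" unfolding used_def
      by (rule card_image_le) (use less.prems(1) in simp)
    also have "\<dots> < k" using less.prems(3) w by blast
    finally have "card used < card {1..k}" by simp
    moreover have "finite used" unfolding used_def using less.prems(1) by simp
    ultimately obtain col where col: "col \<in> {1..k}" "col \<notin> used"
      by (metis card_mono not_le subsetI)
    define c where "c = c'(w := col)"
    have "\<forall>v\<in>V. c v \<in> {1..k}" using c' col V'_def c_def by auto
    moreover have "\<forall>u\<in>V. \<forall>w'\<in>V. N u w' \<longrightarrow> c u \<noteq> c w'"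
    proof (intro ballI impI)
      fix u w' assume u: "u \<in> V" and w': "w' \<in> V" and N: "N u w'"
      have kuw: "key u < key w'" using less.prems(2) u w' N by blast
      show "c u \<noteq> c w'"
      proof (cases "w' = w")
        case True
        then have "u \<noteq> w" using kuw by auto
        moreover have "c' u \<in> used" using u N True used_def by auto
        ultimately show ?thesis using True c_def col by auto
      next
        case False
        have "u \<noteq> w" using kuw wmax w' by force
        then show ?thesis using False c' u w' N V'_def c_def by auto
      qed
    qed
    ultimately show ?thesis by blast
  qed
qed

lemma filter_prefix:
  assumes "sorted_wrt lt L"
    and "\<forall>x\<in>set L. P x \<longrightarrow> Q x"
    and "\<forall>a\<in>set L. \<forall>b\<in>set L. Q a \<and> \<not> P a \<and> P b \<longrightarrow> \<not> lt a b"
  shows "prefix (filter P L) (filter Q L)"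
  using assms
proof (induction L)
  case Nil
  then show ?case by simp
next
  case (Cons x xs)
  show ?case
  proof (cases "P x")
    case True
    then show ?thesis using Cons by auto
  next
    case False
    show ?thesis
    proof (cases "Q x")
      case True
      have "filter P xs = []"
        using Cons.prems False True by (auto simp: filter_empty_conv)
      then show ?thesis using False by simp
    next
      case False2: False
      then show ?thesis using Cons False by auto
    qed
  qed
qed

definition Bg :: "(nat \<times> 'a) list \<Rightarrow> 'a set" where
  "Bg s = (\<lambda>i. snd (s!i)) ` {i. i < length s \<and> fst (s!i) \<notin> fst ` set (drop (Suc i) s)}"

locale coalg_ctx =
  fixes S :: "('a,'r) struct" and k :: nat and \<alpha> :: "'a \<Rightarrow> (nat \<times> 'a) list"
  assumes fin: "finite (fst S)" and coal: "Pk_coalgebra k S \<alpha>"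
begin

lemma hom: "is_hom S (Pk k S) \<alpha>" using coal unfolding Pk_coalgebra_def by blast

lemma univ: "a \<in> fst S \<Longrightarrow> \<alpha> a \<noteq> [] \<and> set (\<alpha> a) \<subseteq> {1..k} \<times> fst S"
  using hom unfolding is_hom_def Pk_def Pk_univ_def by auto

lemma last_id: "a \<in> fst S \<Longrightarrow> snd (last (\<alpha> a)) = a"
  using coal unfolding Pk_coalgebra_def eps_def by blast

lemma inj: "a \<in> fst S \<Longrightarrow> b \<in> fst S \<Longrightarrow> \<alpha> a = \<alpha> b \<Longrightarrow> a = b"
  using last_id by metis

lemma take_prop:
  assumes a: "a \<in> fst S" and i: "i < length (\<alpha> a)"
  shows "\<alpha> (snd (\<alpha> a ! i)) = take (Suc i) (\<alpha> a)"
proof -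
  have "delta (\<alpha> a) = Pk_map \<alpha> (\<alpha> a)" using coal a unfolding Pk_coalgebra_def by blast
  then have "delta (\<alpha> a) ! i = Pk_map \<alpha> (\<alpha> a) ! i" by simp
  moreover have "delta (\<alpha> a) ! i = (fst (\<alpha> a ! i), take (Suc i) (\<alpha> a))"
    using i unfolding delta_def by simp
  moreover have "Pk_map \<alpha> (\<alpha> a) ! i = (fst (\<alpha> a ! i), \<alpha> (snd (\<alpha> a ! i)))"
    using i unfolding Pk_map_def by (simp add: case_prod_beta)
  ultimately show ?thesis by simp
qed

lemma elem_in_full: "a \<in> fst S \<Longrightarrow> i < length (\<alpha> a) \<Longrightarrow> \<alpha> a ! i \<in> {1..k} \<times> fst S"
proof -
  assume "a \<in> fst S" "i < length (\<alpha> a)"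
  then have "\<alpha> a ! i \<in> set (\<alpha> a)" "set (\<alpha> a) \<subseteq> {1..k} \<times> fst S" using univ nth_mem by blast+
  then show ?thesis by blast
qed

lemma elem_in: "a \<in> fst S \<Longrightarrow> i < length (\<alpha> a) \<Longrightarrow> snd (\<alpha> a ! i) \<in> fst S"
  using elem_in_full by force

lemma nth_in_drop: "i < j \<Longrightarrow> j < length s \<Longrightarrow> s ! j \<in> set (drop (Suc i) s)"
proof -
  assume a: "i < j" "j < length s"
  have "drop (Suc i) s ! (j - Suc i) = s ! j" using a by simp
  moreover have "j - Suc i < length (drop (Suc i) s)" using a by simp
  ultimately show ?thesis by (metis nth_mem)
qed

lemma Bg_char1:
  assumes u: "u \<in> fst S" and v: "v \<in> Bg (\<alpha> u)"
  shows "v \<in> fst S \<and> prefix (\<alpha> v) (\<alpha> u) \<and> fst (last (\<alpha> v)) \<notin> fst ` set (drop (length (\<alpha> v)) (\<alpha> u))"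
proof -
  obtain i where i: "i < length (\<alpha> u)" "fst (\<alpha> u ! i) \<notin> fst ` set (drop (Suc i) (\<alpha> u))"
    and vi: "v = snd (\<alpha> u ! i)"
    using v unfolding Bg_def by blast
  have av: "\<alpha> v = take (Suc i) (\<alpha> u)" using take_prop[OF u i(1)] vi by simp
  have "last (\<alpha> v) = \<alpha> u ! i" using av i(1) by (simp add: take_Suc_conv_app_nth) 
  moreover have "length (\<alpha> v) = Suc i" using av i(1) by simp
  ultimately show ?thesis using av i vi elem_in[OF u i(1)] by (simp add: take_is_prefix)
qed

lemma Bg_char2:
  assumes u: "u \<in> fst S" and v: "v \<in> fst S" and p: "prefix (\<alpha> v) (\<alpha> u)"
    and c: "fst (last (\<alpha> v)) \<notin> fst ` set (drop (length (\<alpha> v)) (\<alpha> u))"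
  shows "v \<in> Bg (\<alpha> u)"
proof -
  obtain zs where zs: "\<alpha> u = \<alpha> v @ zs" using p by (auto simp: prefix_def)
  define i where "i = length (\<alpha> v) - 1"
  have ne: "\<alpha> v \<noteq> []" using univ v by blast
  have il: "i < length (\<alpha> u)" using zs ne i_def by (cases "\<alpha> v") auto
  have ui: "\<alpha> u ! i = last (\<alpha> v)" using zs ne i_def by (simp add: nth_append last_conv_nth)
  have "Suc i = length (\<alpha> v)" using ne i_def by simp
  then have "fst (\<alpha> u ! i) \<notin> fst ` set (drop (Suc i) (\<alpha> u))" using c ui by simp
  moreover have "snd (\<alpha> u ! i) = v" using ui last_id v by simp
  ultimately show ?thesis unfolding Bg_def using il by blast
qed

lemma Bg_card:
  assumes u: "u \<in> fst S"
  shows "finite (Bg (\<alpha> u)) \<and> card (Bg (\<alpha> u)) \<le> k"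
proof -
  define s where "s = \<alpha> u"
  define I where "I = {i. i < length s \<and> fst (s!i) \<notin> fst ` set (drop (Suc i) s)}"
  have fI: "finite I" unfolding I_def by simp
  have inj: "inj_on (\<lambda>i. fst (s!i)) I"
  proof (rule inj_onI)
    fix i j assume i: "i \<in> I" and j: "j \<in> I" and e: "fst (s!i) = fst (s!j)"
    show "i = j"
    proof (rule ccontr)
      assume "i \<noteq> j"
      then consider "i < j" | "j < i" by linarith
      then show False
      proof cases
        case 1
        have "s ! j \<in> set (drop (Suc i) s)" using 1 j I_def
          unfolding I_def by (auto intro: nth_in_drop)
        then show False using i e I_def by force
      next
        case 2
        have "s ! i \<in> set (drop (Suc j) s)" using 2 i I_def
          unfolding I_def by (auto intro: nth_in_drop)
        then have "fst (s!j) \<in> fst ` set (drop (Suc j) s)" using e by (metis image_eqI)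
        then show False using j I_def by blast
      qed
    qed
  qed
  have sub: "(\<lambda>i. fst (s!i)) ` I \<subseteq> {1..k}"
    using elem_in_full[OF u] unfolding s_def I_def by force
  have "card (Bg s) \<le> card I" unfolding Bg_def I_def[symmetric] using fI by (rule card_image_le)
  also have "\<dots> = card ((\<lambda>i. fst (s!i)) ` I)" using inj by (simp add: card_image)
  also have "\<dots> \<le> k" using card_mono[OF _ sub] by simp
  finally show ?thesis unfolding s_def Bg_def using fI by simp
qed

lemma rel_props:
  assumes t: "t \<in> snd S r" and i: "i < length t" and j: "j < length t"
  shows "prefix (\<alpha> (t!i)) (\<alpha> (t!j)) \<or> prefix (\<alpha> (t!j)) (\<alpha> (t!i))"
    and "prefix (\<alpha> (t!i)) (\<alpha> (t!j)) \<Longrightarrow>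
          fst (last (\<alpha> (t!i))) \<notin> fst ` set (drop (length (\<alpha> (t!i))) (\<alpha> (t!j)))"
proof -
  have "map \<alpha> t \<in> Pk_rel k S r" using hom t unfolding is_hom_def Pk_def by auto
  then have A: "\<forall>i<length t. \<forall>j<length t. prefix (\<alpha> (t!i)) (\<alpha> (t!j)) \<or> prefix (\<alpha> (t!j)) (\<alpha> (t!i))"
    and B: "\<forall>i<length t. \<forall>j<length t. prefix (\<alpha> (t!i)) (\<alpha> (t!j)) \<longrightarrow>
           fst (last (\<alpha> (t!i))) \<notin> fst ` set (drop (length (\<alpha> (t!i))) (\<alpha> (t!j)))"
    unfolding Pk_rel_def by auto
  show "prefix (\<alpha> (t!i)) (\<alpha> (t!j)) \<or> prefix (\<alpha> (t!j)) (\<alpha> (t!i))" using A i j by blast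
  show "prefix (\<alpha> (t!i)) (\<alpha> (t!j)) \<Longrightarrow>
          fst (last (\<alpha> (t!i))) \<notin> fst ` set (drop (length (\<alpha> (t!i))) (\<alpha> (t!j)))"
    using B i j by blast
qed

lemma decomp_exists:
  "\<exists>T le bag. tree_decomposition (fst S) (gaifman_adj S) T le bag \<and> (\<forall>x\<in>T. card (bag x) \<le> k)"
proof -
  let ?V = "fst S"
  define n where "n = card ?V"
  obtain h where hb: "bij_betw h {0..<n} ?V" using ex_bij_betw_nat_finite[OF fin] n_def by blast
  define A where "A x = \<alpha> (h (x - 1))" for x
  define T where "T = {0..n}"
  define le where "le x y \<longleftrightarrow> x = 0 \<or> (x \<noteq> 0 \<and> y \<noteq> 0 \<and> prefix (A x) (A y))" for x y
  define bag where "bag x = (if x = 0 then {} else Bg (A x))" for x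
  have hV: "h (x - 1) \<in> ?V" if "x \<in> T" "x \<noteq> 0" for x
    using that hb unfolding T_def by (auto intro: bij_betw_apply)
  have node: "\<exists>x\<in>T. x \<noteq> 0 \<and> h (x - 1) = v" if "v \<in> ?V" for v
  proof -
    have "v \<in> h ` {0..<n}" using hb that by (simp add: bij_betw_def)
    then obtain i where "i \<in> {0..<n}" "h i = v" by blast
    then show ?thesis by (intro bexI[of _ "Suc i"]) (auto simp: T_def)
  qed
  have hinj: "x = y" if "x \<in> T" "y \<in> T" "x \<noteq> 0" "y \<noteq> 0" "A x = A y" for x y
  proof -
    have "h (x - 1) = h (y - 1)" using inj[OF hV[OF that(1,3)] hV[OF that(2,4)]] that(5) unfolding A_def by blast
    moreover have "x - 1 \<in> {0..<n}" "y - 1 \<in> {0..<n}" using that T_def by auto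
    ultimately have "x - 1 = y - 1" using hb unfolding bij_betw_def inj_on_def by blast
    then show ?thesis using that by simp
  qed
  have rt: "rooted_tree T le"
    unfolding rooted_tree_def
  proof (intro conjI)
    show "finite T" by (simp add: T_def)
    show "\<forall>x\<in>T. le x x" by (auto simp: le_def)
    show "\<exists>r\<in>T. \<forall>x\<in>T. le r x" by (rule bexI[of _ 0]) (auto simp: le_def T_def)
    show "\<forall>x\<in>T. \<forall>y\<in>T. le x y \<and> le y x \<longrightarrow> x = y"
    proof (intro ballI impI)
      fix x y assume x: "x \<in> T" and y: "y \<in> T" and "le x y \<and> le y x"
      then show "x = y" using hinj[OF x y] prefix_order.antisym unfolding le_def by blast
    qed
    show "\<forall>x\<in>T. \<forall>y\<in>T. \<forall>z\<in>T. le x y \<and> le y z \<longrightarrow> le x z"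
      unfolding le_def using prefix_order.trans by blast
    show "\<forall>x\<in>T. \<forall>y\<in>T. \<forall>z\<in>T. le y x \<and> le z x \<longrightarrow> le y z \<or> le z y"
      unfolding le_def using prefix_same_cases by blast
  qed
  have td: "tree_decomposition ?V (gaifman_adj S) T le bag"
    unfolding tree_decomposition_def
  proof (intro conjI ballI allI impI)
    show "rooted_tree T le" by (rule rt)
  next
    fix x assume x: "x \<in> T"
    show "bag x \<subseteq> ?V" using Bg_char1 hV[OF x] unfolding bag_def A_def by auto
  next
    fix v assume v: "v \<in> ?V"
    obtain x where x: "x \<in> T" "x \<noteq> 0" "h (x - 1) = v" using node[OF v] by blast
    have "v \<in> Bg (\<alpha> v)" by (rule Bg_char2[OF v v]) auto
    then show "\<exists>x\<in>T. v \<in> bag x" using x unfolding bag_def A_def by auto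
  next
    fix v w assume v: "v \<in> ?V" and w: "w \<in> ?V" and adj: "gaifman_adj S v w"
    obtain r t where t: "t \<in> snd S r" "v \<in> set t" "w \<in> set t"
      using adj unfolding gaifman_adj_def by blast
    obtain i j where ij: "i < length t" "j < length t" "t!i = v" "t!j = w"
      using t by (metis in_set_conv_nth)
    have both: "\<exists>x\<in>T. a \<in> bag x \<and> b \<in> bag x"
      if a: "a \<in> ?V" and b: "b \<in> ?V" and p: "prefix (\<alpha> a) (\<alpha> b)"
      and c: "fst (last (\<alpha> a)) \<notin> fst ` set (drop (length (\<alpha> a)) (\<alpha> b))" for a b
    proof -
      obtain x where x: "x \<in> T" "x \<noteq> 0" "h (x - 1) = b" using node[OF b] by blast
      have "a \<in> Bg (\<alpha> b)" by (rule Bg_char2[OF b a p c])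
      moreover have "b \<in> Bg (\<alpha> b)" by (rule Bg_char2[OF b b]) auto
      ultimately show ?thesis using x unfolding bag_def A_def by auto
    qed
    show "\<exists>x\<in>T. v \<in> bag x \<and> w \<in> bag x"
    proof (cases "prefix (\<alpha> v) (\<alpha> w)")
      case True
      then show ?thesis using both[OF v w True] rel_props(2)[OF t(1) ij(1,2)] ij by simp
    next
      case False
      then have p: "prefix (\<alpha> w) (\<alpha> v)" using rel_props(1)[OF t(1) ij(1,2)] ij by auto
      then show ?thesis using both[OF w v p] rel_props(2)[OF t(1) ij(2,1)] ij by blast
    qed
  next
    fix v x y z
    assume H: "x \<in> T \<and> y \<in> T \<and> v \<in> bag x \<and> v \<in> bag y \<and> on_tree_path T le x y z"
    then have x0: "x \<noteq> 0" and y0: "y \<noteq> 0" unfolding bag_def by (auto split: if_splits)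
    have cx: "v \<in> ?V \<and> prefix (\<alpha> v) (A x) \<and> fst (last (\<alpha> v)) \<notin> fst ` set (drop (length (\<alpha> v)) (A x))"
      using Bg_char1[OF hV[OF _ x0]] H x0 unfolding bag_def A_def by auto
    have cy: "v \<in> ?V \<and> prefix (\<alpha> v) (A y) \<and> fst (last (\<alpha> v)) \<notin> fst ` set (drop (length (\<alpha> v)) (A y))"
      using Bg_char1[OF hV[OF _ y0]] H y0 unfolding bag_def A_def by auto
    obtain xv where xv: "xv \<in> T" "xv \<noteq> 0" "h (xv - 1) = v" using node cx by blast
    have "le xv x" "le xv y" using xv cx cy x0 y0 unfolding le_def A_def by auto
    then have "le xv z" using H xv unfolding on_tree_path_def by blast
    then have z0: "z \<noteq> 0" and pz: "prefix (\<alpha> v) (A z)" using xv unfolding le_def A_def by auto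
    have zT: "z \<in> T" using H unfolding on_tree_path_def by blast
    have "fst (last (\<alpha> v)) \<notin> fst ` set (drop (length (\<alpha> v)) (A z))"
    proof -
      have "le z x \<or> le z y" using H unfolding on_tree_path_def by blast
      then obtain u where u: "(u = x \<or> u = y)" "prefix (A z) (A u)" using z0 unfolding le_def by auto
      have "prefix (drop (length (\<alpha> v)) (A z)) (drop (length (\<alpha> v)) (A u))"
        using u(2) by (auto simp: prefix_def)
      then have "set (drop (length (\<alpha> v)) (A z)) \<subseteq> set (drop (length (\<alpha> v)) (A u))"
        by (rule set_mono_prefix)
      then show ?thesis using u(1) cx cy by blast
    qed
    then have "v \<in> Bg (A z)" using Bg_char2[OF hV[OF zT z0]] cx pz unfolding A_def by blast
    then show "v \<in> bag z" using z0 unfolding bag_def by simp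
  qed
  moreover have "\<forall>x\<in>T. card (bag x) \<le> k"
    using Bg_card hV unfolding bag_def A_def by auto
  ultimately show ?thesis by blast
qed

end

locale td_ctx =
  fixes ar :: "'r \<Rightarrow> nat" and S :: "('a,'r) struct" and T :: "nat set"
    and le :: "nat \<Rightarrow> nat \<Rightarrow> bool" and bag :: "nat \<Rightarrow> 'a set"
  assumes struct: "is_struct ar S" and fin: "finite (fst S)"
    and td: "tree_decomposition (fst S) (gaifman_adj S) T le bag"
begin

lemma rt: "rooted_tree T le" using td unfolding tree_decomposition_def by blast
lemma finT: "finite T" using rt unfolding rooted_tree_def by blast
lemma refl: "x \<in> T \<Longrightarrow> le x x" using rt unfolding rooted_tree_def by blast
lemma antisym: "x \<in> T \<Longrightarrow> y \<in> T \<Longrightarrow> le x y \<Longrightarrow> le y x \<Longrightarrow> x = y"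
  using rt unfolding rooted_tree_def by blast
lemma trans: "x \<in> T \<Longrightarrow> y \<in> T \<Longrightarrow> z \<in> T \<Longrightarrow> le x y \<Longrightarrow> le y z \<Longrightarrow> le x z"
  using rt unfolding rooted_tree_def by blast
lemma root: "\<exists>r\<in>T. \<forall>x\<in>T. le r x" using rt unfolding rooted_tree_def by blast
lemma chainT: "x \<in> T \<Longrightarrow> y \<in> T \<Longrightarrow> z \<in> T \<Longrightarrow> le y x \<Longrightarrow> le z x \<Longrightarrow> le y z \<or> le z y"
  using rt unfolding rooted_tree_def by blast
lemma bag_sub: "x \<in> T \<Longrightarrow> bag x \<subseteq> fst S" using td unfolding tree_decomposition_def by blast
lemma cover: "v \<in> fst S \<Longrightarrow> \<exists>x\<in>T. v \<in> bag x" using td unfolding tree_decomposition_def by blast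
lemma edge: "v \<in> fst S \<Longrightarrow> w \<in> fst S \<Longrightarrow> gaifman_adj S v w \<Longrightarrow> \<exists>x\<in>T. v \<in> bag x \<and> w \<in> bag x"
  using td unfolding tree_decomposition_def by blast
lemma conn: "x \<in> T \<Longrightarrow> y \<in> T \<Longrightarrow> v \<in> bag x \<Longrightarrow> v \<in> bag y \<Longrightarrow> on_tree_path T le x y z \<Longrightarrow> v \<in> bag z"
  using td unfolding tree_decomposition_def by blast

definition depth :: "nat \<Rightarrow> nat" where "depth x = card {y\<in>T. le y x}"

lemma depth_le: "depth x \<le> card T"
  unfolding depth_def using finT by (intro card_mono) auto

lemma depth_less: "x \<in> T \<Longrightarrow> y \<in> T \<Longrightarrow> le x y \<Longrightarrow> x \<noteq> y \<Longrightarrow> depth x < depth y"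
proof -
  assume x: "x \<in> T" and y: "y \<in> T" and l: "le x y" and ne: "x \<noteq> y"
  have "{z\<in>T. le z x} \<subset> {z\<in>T. le z y}"
  proof
    show "{z\<in>T. le z x} \<subseteq> {z\<in>T. le z y}" using trans x y l by blast
    have "y \<notin> {z\<in>T. le z x}" using antisym x y l ne by blast
    moreover have "y \<in> {z\<in>T. le z y}" using refl y by blast
    ultimately show "{z\<in>T. le z x} \<noteq> {z\<in>T. le z y}" by blast
  qed
  then show ?thesis unfolding depth_def using finT by (intro psubset_card_mono) auto
qed

lemma top_ex:
  assumes v: "v \<in> fst S"
  shows "\<exists>m\<in>T. v \<in> bag m \<and> (\<forall>x\<in>T. v \<in> bag x \<longrightarrow> le m x)"
proof -
  obtain x0 where x0: "x0 \<in> T" "v \<in> bag x0" using cover v by blast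
  obtain m where m: "m \<in> T \<and> v \<in> bag m" and mmin: "\<forall>y. y \<in> T \<and> v \<in> bag y \<longrightarrow> depth m \<le> depth y"
    using ex_has_least_nat[of "\<lambda>x. x \<in> T \<and> v \<in> bag x" x0 depth] x0 by blast
  have "le m x" if x: "x \<in> T" "v \<in> bag x" for x
  proof -
    obtain r where r: "r \<in> T" "\<forall>x\<in>T. le r x" using root by blast
    obtain w where w: "w \<in> T \<and> le w m \<and> le w x"
      and wmax: "\<forall>c. c \<in> T \<and> le c m \<and> le c x \<longrightarrow> card T - depth w \<le> card T - depth c"
      using ex_has_least_nat[of "\<lambda>c. c \<in> T \<and> le c m \<and> le c x" r "\<lambda>c. card T - depth c"] r m x
      by blast
    have path: "on_tree_path T le m x w"
      unfolding on_tree_path_def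
    proof (intro conjI ballI impI)
      show "w \<in> T" using w by blast
      show "le w m \<or> le w x" using w by blast
      fix c assume c: "c \<in> T" "le c m \<and> le c x"
      have "le c w \<or> le w c" using chainT[of m c w] c w m by blast
      moreover have "\<not> (le w c \<and> c \<noteq> w)"
      proof
        assume "le w c \<and> c \<noteq> w"
        then have "depth w < depth c" using depth_less[of w c] w c by blast
        moreover have "card T - depth w \<le> card T - depth c" using wmax c by blast
        ultimately show False using depth_le[of c] depth_le[of w] by linarith
      qed
      ultimately show "le c w" using refl c by blast
    qed
    have vw: "v \<in> bag w" using conn[OF _ x(1) _ x(2) path] m by blast
    have "w = m"
    proof (rule ccontr)
      assume "w \<noteq> m"
      then have "depth w < depth m" using depth_less[of w m] w m by blast
      moreover have "depth m \<le> depth w" using mmin w vw by blast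
      ultimately show False by linarith
    qed
    then show ?thesis using w by blast
  qed
  then show ?thesis using m by blast
qed

definition top :: "'a \<Rightarrow> nat" where
  "top v = (SOME m. m \<in> T \<and> v \<in> bag m \<and> (\<forall>x\<in>T. v \<in> bag x \<longrightarrow> le m x))"

lemma top: "v \<in> fst S \<Longrightarrow> top v \<in> T \<and> v \<in> bag (top v) \<and> (\<forall>x\<in>T. v \<in> bag x \<longrightarrow> le (top v) x)"
proof -
  assume "v \<in> fst S"
  from top_ex[OF this] have "\<exists>m. m \<in> T \<and> v \<in> bag m \<and> (\<forall>x\<in>T. v \<in> bag x \<longrightarrow> le m x)" by blast
  then show ?thesis unfolding top_def by (rule someI_ex)
qed

definition rr :: "'a \<Rightarrow> nat" where
  "rr = inv_into {0..<card (fst S)} (SOME h. bij_betw h {0..<card (fst S)} (fst S))"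

lemma rr_bij: "bij_betw rr (fst S) {0..<card (fst S)}"
proof -
  have "\<exists>h. bij_betw h {0..<card (fst S)} (fst S)" using ex_bij_betw_nat_finite[OF fin] .
  then have "bij_betw (SOME h. bij_betw h {0..<card (fst S)} (fst S)) {0..<card (fst S)} (fst S)"
    by (rule someI_ex)
  then show ?thesis unfolding rr_def by (rule bij_betw_inv_into)
qed

lemma rr_lt: "v \<in> fst S \<Longrightarrow> rr v < card (fst S)"
  using rr_bij bij_betw_apply by fastforce

lemma rr_inj: "u \<in> fst S \<Longrightarrow> w \<in> fst S \<Longrightarrow> rr u = rr w \<Longrightarrow> u = w"
  using rr_bij unfolding bij_betw_def inj_on_def by blast

definition vlt :: "'a \<Rightarrow> 'a \<Rightarrow> bool" where
  "vlt u w \<longleftrightarrow> (le (top u) (top w) \<and> top u \<noteq> top w) \<or> (top u = top w \<and> rr u < rr w)"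

definition vle :: "'a \<Rightarrow> 'a \<Rightarrow> bool" where
  "vle u w \<longleftrightarrow> u = w \<or> vlt u w"

definition key :: "'a \<Rightarrow> nat" where
  "key u = depth (top u) * card (fst S) + rr u"

lemma key_lt:
  assumes u: "u \<in> fst S" and w: "w \<in> fst S" and l: "vlt u w"
  shows "key u < key w"
proof (cases "top u = top w")
  case True
  then show ?thesis using l unfolding vlt_def key_def by auto
next
  case False
  then have "le (top u) (top w)" using l unfolding vlt_def by auto
  then have d: "depth (top u) < depth (top w)" using depth_less top u w False by blast
  have "key u < depth (top u) * card (fst S) + card (fst S)" unfolding key_def using rr_lt[OF u] by simp
  also have "\<dots> = Suc (depth (top u)) * card (fst S)" by simp
  also have "\<dots> \<le> depth (top w) * card (fst S)" using d by (intro mult_right_mono) auto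
  also have "\<dots> \<le> key w" unfolding key_def by simp
  finally show ?thesis .
qed

lemma key_inj:
  assumes u: "u \<in> fst S" and w: "w \<in> fst S" and e: "key u = key w"
  shows "u = w"
proof -
  have "key u mod card (fst S) = rr u" unfolding key_def using rr_lt[OF u] by simp
  moreover have "key w mod card (fst S) = rr w" unfolding key_def using rr_lt[OF w] by simp
  ultimately show ?thesis using e rr_inj u w by simp
qed

lemma vle_key: "u \<in> fst S \<Longrightarrow> w \<in> fst S \<Longrightarrow> vle u w \<Longrightarrow> key u \<le> key w"
  unfolding vle_def using key_lt by fastforce

lemma vlt_irrefl: "\<not> vlt u u" unfolding vlt_def by simp

lemma vle_top: "u \<in> fst S \<Longrightarrow> w \<in> fst S \<Longrightarrow> vle u w \<Longrightarrow> le (top u) (top w)"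
  unfolding vle_def vlt_def using refl top by auto

lemma vlt_trans:
  assumes u: "u \<in> fst S" and v: "v \<in> fst S" and w: "w \<in> fst S" and a: "vlt u v" and b: "vlt v w"
  shows "vlt u w"
proof -
  have tu: "le (top u) (top v)" and tv: "le (top v) (top w)"
    using vle_top u v w a b unfolding vle_def by auto
  have tuw: "le (top u) (top w)" using trans tu tv top u v w by blast
  show ?thesis
  proof (cases "top u = top w")
    case True
    then have "top u = top v" using antisym tu tv top u v w by metis
    then show ?thesis using a b True unfolding vlt_def by auto
  next
    case False
    then show ?thesis using tuw unfolding vlt_def by auto
  qed
qed

lemma vle_trans: "u \<in> fst S \<Longrightarrow> v \<in> fst S \<Longrightarrow> w \<in> fst S \<Longrightarrow> vle u v \<Longrightarrow> vle v w \<Longrightarrow> vle u w"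
  unfolding vle_def using vlt_trans by blast

lemma top_comp:
  assumes u: "u \<in> fst S" and w: "w \<in> fst S" and x: "x \<in> T"
    and a: "le (top u) x" and b: "le (top w) x"
  shows "vle u w \<or> vle w u"
proof -
  have c: "le (top u) (top w) \<or> le (top w) (top u)" using chainT[OF x] a b top u w by blast
  show ?thesis
  proof (cases "top u = top w")
    case True
    then show ?thesis unfolding vle_def vlt_def using rr_inj[OF u w] by (cases "rr u < rr w") auto
  next
    case False
    then show ?thesis using c unfolding vle_def vlt_def by auto
  qed
qed

lemma vle_comp:
  assumes u: "u \<in> fst S" and u': "u' \<in> fst S" and v: "v \<in> fst S"
    and a: "vle u v" and b: "vle u' v"
  shows "vle u u' \<or> vle u' u"
  using top_comp[OF u u' _ vle_top[OF u v a] vle_top[OF u' v b]] top v by blast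

definition L :: "'a list" where
  "L = map (inv_into (fst S) key) (sorted_list_of_set (key ` fst S))"

lemma key_inj_on: "inj_on key (fst S)" using key_inj by (meson inj_onI)

lemma L_set: "set L = fst S"
  unfolding L_def using fin key_inj_on by (simp add: inv_into_image_cancel)

lemma L_sorted: "sorted_wrt (\<lambda>a b. key a < key b) L"
proof -
  have "sorted_wrt (<) (sorted_list_of_set (key ` fst S))" by (rule strict_sorted_list_of_set)
  moreover have "\<forall>x\<in>set (sorted_list_of_set (key ` fst S)). key (inv_into (fst S) key x) = x"
    using fin by (simp add: f_inv_into_f)
  ultimately show ?thesis unfolding L_def sorted_wrt_map
    by (metis (no_types, lifting) sorted_wrt_mono_rel)
qed

lemma L_distinct: "distinct L"
proof -
  have "distinct (map key L)"
    using L_sorted by (simp add: sorted_wrt_map[symmetric] strict_sorted_iff)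
  then show ?thesis by (simp add: distinct_map)
qed

definition chain :: "'a \<Rightarrow> 'a list" where
  "chain v = filter (\<lambda>x. vle x v) L"

lemma chain_set: "set (chain v) = {x\<in>fst S. vle x v}"
  unfolding chain_def using L_set by auto

lemma chain_sorted: "sorted_wrt (\<lambda>a b. key a < key b) (chain v)"
  unfolding chain_def using L_sorted by (rule sorted_wrt_filter)

lemma chain_distinct: "distinct (chain v)"
  unfolding chain_def using L_distinct by simp

lemma chain_last: assumes v: "v \<in> fst S" shows "chain v \<noteq> [] \<and> last (chain v) = v"
proof -
  have vin: "v \<in> set (chain v)" using chain_set v unfolding vle_def by auto
  then have ne: "chain v \<noteq> []" by auto
  then obtain ys z where yz: "chain v = ys @ [z]" by (metis rev_exhaust)
  have "z = v"
  proof (rule ccontr)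
    assume "z \<noteq> v"
    then have "v \<in> set ys" using vin yz by auto
    then have "key v < key z" using chain_sorted[of v] yz by (auto simp: sorted_wrt_append)
    moreover have "z \<in> set (chain v)" using yz by simp
    then have "z \<in> fst S" "vle z v" using chain_set by auto
    then have "key z \<le> key v" using vle_key v by blast
    ultimately show False by simp
  qed
  then show ?thesis using ne yz by simp
qed

lemma chain_prefix:
  assumes u: "u \<in> fst S" and v: "v \<in> fst S" and uv: "vle u v"
  shows "prefix (chain u) (chain v)"
  unfolding chain_def
proof (rule filter_prefix[OF L_sorted])
  show "\<forall>x\<in>set L. vle x u \<longrightarrow> vle x v" using vle_trans u v uv L_set by blast
  show "\<forall>a\<in>set L. \<forall>b\<in>set L. vle a v \<and> \<not> vle a u \<and> vle b u \<longrightarrow> \<not> key a < key b"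
  proof (intro ballI impI)
    fix a b assume a: "a \<in> set L" and b: "b \<in> set L" and H: "vle a v \<and> \<not> vle a u \<and> vle b u"
    have aS: "a \<in> fst S" and bS: "b \<in> fst S" using a b L_set by auto
    have "vle u a" using vle_comp[OF aS u v] H uv by blast
    then have "vlt u a" using H unfolding vle_def by auto
    then have "key u < key a" using key_lt u aS by blast
    moreover have "key b \<le> key u" using vle_key bS u H by blast
    ultimately show "\<not> key a < key b" by simp
  qed
qed

lemma chain_take:
  assumes v: "v \<in> fst S" and i: "i < length (chain v)"
  shows "chain (chain v ! i) = take (Suc i) (chain v)"
proof -
  let ?c = "chain v"
  let ?x = "?c ! i"
  have xin: "?x \<in> set ?c" using i by simp
  then have xS: "?x \<in> fst S" and xv: "vle ?x v" using chain_set by auto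
  have p: "prefix (chain ?x) ?c" using chain_prefix[OF xS v xv] .
  then obtain zs where zs: "?c = chain ?x @ zs" by (auto simp: prefix_def)
  define m where "m = length (chain ?x)"
  have eq: "chain ?x = take m ?c" using zs[symmetric] m_def by (metis append_eq_conv_conj)
  have cl: "chain ?x \<noteq> [] \<and> last (chain ?x) = ?x" using chain_last[OF xS] .
  have m0: "0 < m" using cl m_def by auto
  have mle: "m \<le> length ?c" using m_def p prefix_length_le by blast
  have "last (chain ?x) = ?c ! (m - 1)" using eq m0 mle
    by (cases m) (auto simp: take_Suc_conv_app_nth)
  then have "?c ! (m - 1) = ?c ! i" using cl by simp
  then have "m - 1 = i" using chain_distinct[of v] i m0 mle nth_eq_iff_index_eq
    by (metis diff_less less_le_trans zero_less_one)
  then have "m = Suc i" using m0 by simp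
  then show ?thesis using eq by simp
qed

definition kk :: nat where "kk = Max ((\<lambda>x. card (bag x)) ` T)"

definition NN :: "'a \<Rightarrow> 'a \<Rightarrow> bool" where "NN u w \<longleftrightarrow> vlt u w \<and> u \<in> bag (top w)"

lemma color: "\<exists>c. (\<forall>v\<in>fst S. c v \<in> {1..kk}) \<and> (\<forall>u\<in>fst S. \<forall>w\<in>fst S. NN u w \<longrightarrow> c u \<noteq> c w)"
proof (rule greedy_color[OF fin, of NN key])
  show "\<And>u w. u \<in> fst S \<Longrightarrow> w \<in> fst S \<Longrightarrow> NN u w \<Longrightarrow> key u < key w"
    unfolding NN_def using key_lt by blast
  fix w assume w: "w \<in> fst S"
  have tw: "top w \<in> T" "w \<in> bag (top w)" using top[OF w] by auto
  have fb: "finite (bag (top w))" using bag_sub[OF tw(1)] fin finite_subset by blast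
  have "{u\<in>fst S. NN u w} \<subseteq> bag (top w) - {w}" unfolding NN_def using vlt_irrefl by auto
  then have "card {u\<in>fst S. NN u w} \<le> card (bag (top w) - {w})" using fb by (intro card_mono) auto
  also have "\<dots> < card (bag (top w))" using fb tw(2) by (meson card_Diff1_less)
  also have "\<dots> \<le> kk" unfolding kk_def using finT tw(1) by (intro Max_ge) auto
  finally show "card {u\<in>fst S. NN u w} < kk" .
qed

lemma tuple_in: "t \<in> snd S r \<Longrightarrow> set t \<subseteq> fst S"
  using struct unfolding is_struct_def by blast

lemma tuple_cmp:
  assumes t: "t \<in> snd S r" and a: "a \<in> set t" and b: "b \<in> set t"
  shows "vle a b \<or> vle b a"
proof (cases "a = b")
  case True then show ?thesis unfolding vle_def by blast
next
  case False
  have aS: "a \<in> fst S" and bS: "b \<in> fst S" using tuple_in t a b by auto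
  have "gaifman_adj S a b" unfolding gaifman_adj_def using False t a b by blast
  then obtain x where x: "x \<in> T" "a \<in> bag x" "b \<in> bag x" using edge aS bS by blast
  show ?thesis using top_comp[OF aS bS x(1)] top[OF aS] top[OF bS] x by blast
qed

lemma coalg_exists: "\<exists>\<alpha>. Pk_coalgebra kk S \<alpha>"
proof -
  obtain col where col: "\<forall>v\<in>fst S. col v \<in> {1..kk}" "\<forall>u\<in>fst S. \<forall>w\<in>fst S. NN u w \<longrightarrow> col u \<noteq> col w"
    using color by blast
  define f where "f u = (col u, u)" for u
  define \<alpha> where "\<alpha> v = map f (chain v)" for v
  have snd_f: "map snd (map f xs) = xs" for xs unfolding f_def by (induction xs) auto
  have univ: "\<alpha> a \<in> Pk_univ kk (fst S)" if a: "a \<in> fst S" for a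
    using chain_last[OF a] col(1) chain_set unfolding \<alpha>_def Pk_univ_def f_def by auto
  have epsa: "eps (\<alpha> a) = a" if a: "a \<in> fst S" for a
    using chain_last[OF a] unfolding \<alpha>_def eps_def f_def by (simp add: last_map)
  have prefc: "prefix (chain a) (chain b)" if "prefix (\<alpha> a) (\<alpha> b)" for a b
    using map_mono_prefix[OF that, of snd] snd_f unfolding \<alpha>_def by simp
  have peb: "fst (last (\<alpha> a)) \<notin> fst ` set (drop (length (\<alpha> a)) (\<alpha> b))"
    if t: "t \<in> snd S r" and a: "a \<in> set t" and b: "b \<in> set t" and p: "prefix (\<alpha> a) (\<alpha> b)" for t r a b
  proof (cases "a = b")
    case True then show ?thesis by simp
  next
    case False
    have aS: "a \<in> fst S" and bS: "b \<in> fst S" using tuple_in t a b by auto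
    obtain zs where zs: "chain b = chain a @ zs" using prefc[OF p] by (auto simp: prefix_def)
    have dr: "drop (length (\<alpha> a)) (\<alpha> b) = map f zs" unfolding \<alpha>_def using zs by simp
    have la: "fst (last (\<alpha> a)) = col a" using chain_last[OF aS] unfolding \<alpha>_def f_def by (simp add: last_map)
    show ?thesis
    proof
      assume "fst (last (\<alpha> a)) \<in> fst ` set (drop (length (\<alpha> a)) (\<alpha> b))"
      then obtain w where w: "w \<in> set zs" "col a = col w" using dr la unfolding f_def by auto
      have wb: "w \<in> set (chain b)" using w zs by simp
      then have wS: "w \<in> fst S" and wvb: "vle w b" using chain_set by auto
      have "w \<notin> set (chain a)" using chain_distinct[of b] zs w by auto
      then have nwa: "\<not> vle w a" using chain_set wS by auto
      have ainb: "a \<in> set (chain a)" using chain_last[OF aS] by (metis last_in_set)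
      then have "a \<in> set (chain b)" using zs by simp
      then have avb: "vle a b" using chain_set by auto
      have "vle a w" using vle_comp[OF aS wS bS avb wvb] nwa by blast
      then have aw: "vlt a w" using nwa unfolding vle_def by auto
      have "gaifman_adj S a b" unfolding gaifman_adj_def using False t a b by blast
      then obtain x where x: "x \<in> T" "a \<in> bag x" "b \<in> bag x" using edge aS bS by blast
      have ta: "top a \<in> T" "a \<in> bag (top a)" using top[OF aS] by auto
      have tw: "top w \<in> T" using top[OF wS] by auto
      have taw: "le (top a) (top w)" using vle_top[OF aS wS] aw unfolding vle_def by blast
      have twx: "le (top w) x"
        using trans[OF tw _ x(1) vle_top[OF wS bS wvb]] top[OF bS] x by blast
      have path: "on_tree_path T le (top a) x (top w)"
        unfolding on_tree_path_def using tw twx taw trans ta(1) by blast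
      have "a \<in> bag (top w)" using conn[OF ta(1) x(1) ta(2) x(2) path] .
      then have "NN a w" using aw unfolding NN_def by blast
      then show False using col(2) aS wS w(2) by blast
    qed
  qed
  have "Pk_coalgebra kk S \<alpha>"
    unfolding Pk_coalgebra_def
  proof (intro conjI ballI)
    show "is_hom S (Pk kk S) \<alpha>"
      unfolding is_hom_def Pk_def
    proof (intro conjI ballI allI)
      fix a assume "a \<in> fst S" then show "\<alpha> a \<in> fst (Pk_univ kk (fst S), Pk_rel kk S)" using univ by simp
    next
      fix r t assume t: "t \<in> snd S r"
      have tS: "set t \<subseteq> fst S" using tuple_in t .
      show "map \<alpha> t \<in> snd (Pk_univ kk (fst S), Pk_rel kk S) r"
        unfolding Pk_rel_def snd_conv
      proof (intro CollectI conjI allI impI)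
        show "set (map \<alpha> t) \<subseteq> Pk_univ kk (fst S)" using univ tS by auto
        fix i j assume i: "i < length (map \<alpha> t)" and j: "j < length (map \<alpha> t)"
        have ti: "t!i \<in> set t" and tj: "t!j \<in> set t" using i j by auto
        show "prefix (map \<alpha> t ! i) (map \<alpha> t ! j) \<or> prefix (map \<alpha> t ! j) (map \<alpha> t ! i)"
          using tuple_cmp[OF t ti tj] chain_prefix tS ti tj map_mono_prefix
          unfolding \<alpha>_def using i j by (metis length_map nth_map subsetD)
      next
        fix i j assume i: "i < length (map \<alpha> t)" and j: "j < length (map \<alpha> t)"
          and p: "prefix (map \<alpha> t ! i) (map \<alpha> t ! j)"
        have ti: "t!i \<in> set t" and tj: "t!j \<in> set t" using i j by auto
        show "fst (last (map \<alpha> t ! i)) \<notin> fst ` set (drop (length (map \<alpha> t ! i)) (map \<alpha> t ! j))"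
          using peb[OF t ti tj] p i j by simp
      next
        have "map eps (map \<alpha> t) = t" using epsa tS by (induction t) auto
        then show "map eps (map \<alpha> t) \<in> snd S r" using t by simp
      qed
    qed
  next
    fix a assume a: "a \<in> fst S"
    show "eps (\<alpha> a) = a" using epsa[OF a] .
    show "delta (\<alpha> a) = Pk_map \<alpha> (\<alpha> a)"
    proof (rule nth_equalityI)
      show "length (delta (\<alpha> a)) = length (Pk_map \<alpha> (\<alpha> a))"
        unfolding delta_def Pk_map_def by simp
      fix i assume i: "i < length (delta (\<alpha> a))"
      then have ic: "i < length (chain a)" unfolding delta_def \<alpha>_def by simp
      have "delta (\<alpha> a) ! i = (col (chain a ! i), map f (take (Suc i) (chain a)))"
        using ic unfolding delta_def \<alpha>_def f_def by (simp add: take_map)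
      moreover have "Pk_map \<alpha> (\<alpha> a) ! i = (col (chain a ! i), map f (chain (chain a ! i)))"
        using ic unfolding Pk_map_def \<alpha>_def f_def by simp
      ultimately show "delta (\<alpha> a) ! i = Pk_map \<alpha> (\<alpha> a) ! i"
        using chain_take[OF a ic] by simp
    qed
  qed
  then show ?thesis by blast
qed

end

lemma A_bound:
  assumes st: "is_struct ar S" and fin: "finite (fst S)" and ne: "fst S \<noteq> {}"
    and td: "tree_decomposition (fst S) (gaifman_adj S) T le bag"
  shows "int (kappaP S) - 1 \<le> decomp_width T bag \<and> (\<exists>\<alpha>. Pk_coalgebra (kappaP S) S \<alpha>) \<and> kappaP S \<ge> 1"
proof -
  interpret td_ctx ar S T le bag using st fin td by unfold_locales
  obtain v where v: "v \<in> fst S" using ne by blast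
  obtain x where x: "x \<in> T" "v \<in> bag x" using cover v by blast
  have "finite (bag x)" using bag_sub[OF x(1)] fin finite_subset by blast
  then have "card (bag x) \<ge> 1" using x(2) by (metis One_nat_def Suc_leI card_gt_0_iff empty_iff)
  moreover have "card (bag x) \<le> kk" unfolding kk_def using finT x(1) by (intro Max_ge) auto
  ultimately have k1: "kk \<ge> 1" by linarith
  have P: "kk \<ge> 1 \<and> (\<exists>\<alpha>. Pk_coalgebra kk S \<alpha>)" using k1 coalg_exists by blast
  have "kappaP S \<le> kk" unfolding kappaP_def by (rule Least_le) (rule P)
  moreover have "decomp_width T bag = int kk - 1" unfolding decomp_width_def kk_def by simp
  moreover have "kappaP S \<ge> 1 \<and> (\<exists>\<alpha>. Pk_coalgebra (kappaP S) S \<alpha>)"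
    unfolding kappaP_def by (rule LeastI[of _ kk]) (rule P)
  ultimately show ?thesis by auto
qed

lemma trivial_td:
  "tree_decomposition (fst S) (gaifman_adj S) {0} (=) (\<lambda>_. fst S)"
  unfolding tree_decomposition_def rooted_tree_def on_tree_path_def by auto

theorem mainTheorem14:
  fixes S :: "('a, 'r) struct" and ar :: "'r \<Rightarrow> nat"
  assumes "is_struct ar S" and "finite (fst S)" and "fst S \<noteq> {}"
  shows "tw S = int (kappaP S) - 1"
proof -
  let ?K = "kappaP S"
  have K: "(\<exists>\<alpha>. Pk_coalgebra ?K S \<alpha>) \<and> ?K \<ge> 1"
    using A_bound[OF assms trivial_td] by blast
  then obtain \<alpha> where \<alpha>: "Pk_coalgebra ?K S \<alpha>" by blast
  interpret coalg_ctx S ?K \<alpha> using assms(2) \<alpha> by unfold_locales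
  obtain T le bag where td: "tree_decomposition (fst S) (gaifman_adj S) T le bag"
    and cb: "\<forall>x\<in>T. card (bag x) \<le> ?K"
    using decomp_exists by blast
  have Tne: "T \<noteq> {}" and finT: "finite T"
    using td unfolding tree_decomposition_def rooted_tree_def by auto
  have "Max ((\<lambda>x. card (bag x)) ` T) \<le> ?K" using cb Tne finT by (subst Max_le_iff) auto
  then have w1: "decomp_width T bag \<le> int ?K - 1" unfolding decomp_width_def by simp
  have w2: "int ?K - 1 \<le> decomp_width T bag" using A_bound[OF assms td] by blast
  show ?thesis
    unfolding tw_def treewidth_def
  proof (rule Least_equality)
    show "\<exists>T le bag. tree_decomposition (fst S) (gaifman_adj S) T le bag \<and> int ?K - 1 = decomp_width T bag"
    proof (intro exI conjI)
      show "tree_decomposition (fst S) (gaifman_adj S) T le bag" by (rule td)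
      show "int ?K - 1 = decomp_width T bag" using w1 w2 by linarith
    qed
    fix w assume "\<exists>T le bag. tree_decomposition (fst S) (gaifman_adj S) T le bag \<and> w = decomp_width T bag"
    then show "int ?K - 1 \<le> w" using A_bound[OF assms] by blast
  qed
qed

end
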